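(* Let $(\mathbf A,\tau)$ be a state-morphism algebra and let $\theta_\tau=\{(x,y)\in A\times A:\tau(x)=\tau(y)\}$. If $\theta$ is a congruence of $\mathbf A$ with $\theta\subseteq\theta_\tau$, then $\theta$ is a congruence of $(\mathbf A,\tau)$. Moreover, if $x,y\in A$ satisfy $(x,y)\in\theta_\tau$, then $\Theta(x,y)=\Theta_\tau(x,y)$.
   Context: Let $F$ be an arbitrary algebraic type. A state-morphism on an algebra $\mathbf A$ of type $F$ is an endomorphism $\tau:\mathbf A\to\mathbf A$ with $\tau\circ\tau=\tau$; $(\mathbf A,\tau)$, viewed as an algebra of type $F$ extended by the unary operation $\tau$, is a state-morphism algebra. Its congruences are the congruences of $\mathbf A$ compatible with $\tau$. $\Theta(x,y)$ denotes the congruence of $\mathbf A$ generated by the pair $(x,y)$, and $\Theta_\tau(x,y)$ the congruence of $(\mathbf A,\tau)$ generated by $(x,y)$. *)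

theory Defs
  imports Main
begin

text \<open>An algebra of an arbitrary (finitary) type F: a set of operation symbols of type 'f,
  an arity function ar, a carrier A, and an interpretation op, where op f xs is the
  value of the fundamental operation f on the argument list xs (of length ar f).\<close>

definition is_algebra :: "('f \<Rightarrow> nat) \<Rightarrow> 'a set \<Rightarrow> ('f \<Rightarrow> 'a list \<Rightarrow> 'a) \<Rightarrow> bool" where
  "is_algebra ar A op \<longleftrightarrow>
     (\<forall>f xs. length xs = ar f \<and> set xs \<subseteq> A \<longrightarrow> op f xs \<in> A)"

definition is_endomorphism :: "('f \<Rightarrow> nat) \<Rightarrow> 'a set \<Rightarrow> ('f \<Rightarrow> 'a list \<Rightarrow> 'a) \<Rightarrow> ('a \<Rightarrow> 'a) \<Rightarrow> bool" where
  "is_endomorphism ar A op \<tau> \<longleftrightarrow>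
     (\<forall>x\<in>A. \<tau> x \<in> A) \<and>
     (\<forall>f xs. length xs = ar f \<and> set xs \<subseteq> A \<longrightarrow> \<tau> (op f xs) = op f (map \<tau> xs))"

definition state_morphism_algebra :: "('f \<Rightarrow> nat) \<Rightarrow> 'a set \<Rightarrow> ('f \<Rightarrow> 'a list \<Rightarrow> 'a) \<Rightarrow> ('a \<Rightarrow> 'a) \<Rightarrow> bool" where
  "state_morphism_algebra ar A op \<tau> \<longleftrightarrow>
     is_algebra ar A op \<and> is_endomorphism ar A op \<tau> \<and> (\<forall>x\<in>A. \<tau> (\<tau> x) = \<tau> x)"

definition is_congruence :: "('f \<Rightarrow> nat) \<Rightarrow> 'a set \<Rightarrow> ('f \<Rightarrow> 'a list \<Rightarrow> 'a) \<Rightarrow> 'a rel \<Rightarrow> bool" where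
  "is_congruence ar A op \<theta> \<longleftrightarrow>
     equiv A \<theta> \<and>
     (\<forall>f xs ys. length xs = ar f \<and> list_all2 (\<lambda>x y. (x, y) \<in> \<theta>) xs ys
        \<longrightarrow> (op f xs, op f ys) \<in> \<theta>)"

definition is_sm_congruence :: "('f \<Rightarrow> nat) \<Rightarrow> 'a set \<Rightarrow> ('f \<Rightarrow> 'a list \<Rightarrow> 'a) \<Rightarrow> ('a \<Rightarrow> 'a) \<Rightarrow> 'a rel \<Rightarrow> bool" where
  "is_sm_congruence ar A op \<tau> \<theta> \<longleftrightarrow>
     is_congruence ar A op \<theta> \<and> (\<forall>(x, y)\<in>\<theta>. (\<tau> x, \<tau> y) \<in> \<theta>)"

definition Cg :: "('f \<Rightarrow> nat) \<Rightarrow> 'a set \<Rightarrow> ('f \<Rightarrow> 'a list \<Rightarrow> 'a) \<Rightarrow> 'a \<Rightarrow> 'a \<Rightarrow> 'a rel" where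
  "Cg ar A op x y = \<Inter>{\<theta>. is_congruence ar A op \<theta> \<and> (x, y) \<in> \<theta>}"

definition Cg_sm :: "('f \<Rightarrow> nat) \<Rightarrow> 'a set \<Rightarrow> ('f \<Rightarrow> 'a list \<Rightarrow> 'a) \<Rightarrow> ('a \<Rightarrow> 'a) \<Rightarrow> 'a \<Rightarrow> 'a \<Rightarrow> 'a rel" where
  "Cg_sm ar A op \<tau> x y = \<Inter>{\<theta>. is_sm_congruence ar A op \<tau> \<theta> \<and> (x, y) \<in> \<theta>}"

definition ker_rel :: "'a set \<Rightarrow> ('a \<Rightarrow> 'a) \<Rightarrow> 'a rel" where
  "ker_rel A \<tau> = {(x, y). x \<in> A \<and> y \<in> A \<and> \<tau> x = \<tau> y}"

end

theory Submission
  imports Defs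
begin

lemma cong_Inter:
  assumes "S \<noteq> {}" "\<And>\<theta>. \<theta> \<in> S \<Longrightarrow> is_congruence ar A op \<theta>"
  shows "is_congruence ar A op (\<Inter>S)"
proof -
  obtain \<theta>0 where t0: "\<theta>0 \<in> S" using assms(1) by blast
  have eq: "\<And>\<theta>. \<theta> \<in> S \<Longrightarrow> equiv A \<theta>" using assms(2) is_congruence_def by blast
  have "equiv A (\<Inter>S)"
  proof (rule equivI)
    have "\<theta>0 \<subseteq> A \<times> A" using eq[OF t0] by (simp add: equiv_def)
    then show "\<Inter>S \<subseteq> A \<times> A" using t0 by (meson Inter_lower order_trans)
  next
    show "refl_on A (\<Inter>S)"
    proof (rule refl_onI)
      fix x assume x: "x \<in> A"
      show "(x, x) \<in> \<Inter>S"
      proof (rule InterI)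
        fix \<theta> assume "\<theta> \<in> S"
        then have "refl_on A \<theta>" using eq by (simp add: equiv_def)
        then show "(x, x) \<in> \<theta>" using x by (rule refl_onD)
      qed
    qed
  next
    show "sym (\<Inter>S)"
    proof (rule symI)
      fix x y assume h: "(x, y) \<in> \<Inter>S"
      show "(y, x) \<in> \<Inter>S"
      proof (rule InterI)
        fix \<theta> assume t: "\<theta> \<in> S"
        then have "sym \<theta>" using eq by (simp add: equiv_def)
        moreover have "(x, y) \<in> \<theta>" using h t by (rule InterD)
        ultimately show "(y, x) \<in> \<theta>" by (rule symD)
      qed
    qed
  next
    show "trans (\<Inter>S)"
    proof (rule transI)
      fix x y z assume h: "(x, y) \<in> \<Inter>S" "(y, z) \<in> \<Inter>S"
      show "(x, z) \<in> \<Inter>S"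
      proof (rule InterI)
        fix \<theta> assume t: "\<theta> \<in> S"
        then have "trans \<theta>" using eq by (simp add: equiv_def)
        moreover have "(x, y) \<in> \<theta>" using h(1) t by (rule InterD)
        moreover have "(y, z) \<in> \<theta>" using h(2) t by (rule InterD)
        ultimately show "(x, z) \<in> \<theta>" by (rule transD)
      qed
    qed
  qed
  moreover have "\<forall>f xs ys. length xs = ar f \<and> list_all2 (\<lambda>x y. (x, y) \<in> \<Inter>S) xs ys
        \<longrightarrow> (op f xs, op f ys) \<in> \<Inter>S"
  proof (intro allI impI)
    fix f xs ys assume h: "length xs = ar f \<and> list_all2 (\<lambda>x y. (x, y) \<in> \<Inter>S) xs ys"
    show "(op f xs, op f ys) \<in> \<Inter>S"
    proof
      fix \<theta> assume t: "\<theta> \<in> S"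
      have "list_all2 (\<lambda>x y. (x, y) \<in> \<theta>) xs ys"
        using conjunct2[OF h] by (rule list_all2_mono) (use t in blast)
      moreover have "\<forall>f xs ys. length xs = ar f \<and> list_all2 (\<lambda>x y. (x, y) \<in> \<theta>) xs ys
        \<longrightarrow> (op f xs, op f ys) \<in> \<theta>" using assms(2)[OF t] unfolding is_congruence_def by (rule conjunct2)
      ultimately show "(op f xs, op f ys) \<in> \<theta>" using h by simp
    qed
  qed
  ultimately show ?thesis unfolding is_congruence_def by blast
qed

theorem lemma3p3:
  fixes ar :: "'f \<Rightarrow> nat" and A :: "'a set" and op :: "'f \<Rightarrow> 'a list \<Rightarrow> 'a"
    and \<tau> :: "'a \<Rightarrow> 'a"
  assumes "state_morphism_algebra ar A op \<tau>"
  shows "(\<forall>\<theta>. is_congruence ar A op \<theta> \<and> \<theta> \<subseteq> ker_rel A \<tau> \<longrightarrow> is_sm_congruence ar A op \<tau> \<theta>)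
    \<and> (\<forall>x\<in>A. \<forall>y\<in>A. (x, y) \<in> ker_rel A \<tau> \<longrightarrow> Cg ar A op x y = Cg_sm ar A op \<tau> x y)"
proof -
  have alg: "is_algebra ar A op" and endo: "is_endomorphism ar A op \<tau>"
    using assms unfolding state_morphism_algebra_def by auto
  have P1: "is_sm_congruence ar A op \<tau> \<theta>" if h: "is_congruence ar A op \<theta>" "\<theta> \<subseteq> ker_rel A \<tau>" for \<theta>
  proof -
    have e: "equiv A \<theta>" using h is_congruence_def by blast
    have "(\<tau> x, \<tau> y) \<in> \<theta>" if "(x, y) \<in> \<theta>" for x y
    proof -
      have "x \<in> A" "\<tau> x = \<tau> y" using that h(2) unfolding ker_rel_def by auto
      moreover have "\<tau> x \<in> A" using endo \<open>x \<in> A\<close> unfolding is_endomorphism_def by blast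
      ultimately show ?thesis using e unfolding equiv_def refl_on_def by auto
    qed
    then show ?thesis using h unfolding is_sm_congruence_def by blast
  qed
  have kc: "is_congruence ar A op (ker_rel A \<tau>)"
  proof -
    have "equiv A (ker_rel A \<tau>)"
      unfolding equiv_def refl_on_def sym_def trans_def ker_rel_def by auto
    moreover have "(op f xs, op f ys) \<in> ker_rel A \<tau>"
      if h: "length xs = ar f" "list_all2 (\<lambda>x y. (x, y) \<in> ker_rel A \<tau>) xs ys" for f xs ys
    proof -
      have ly: "length ys = ar f" using h list_all2_lengthD by metis
      have sx: "set xs \<subseteq> A" and sy: "set ys \<subseteq> A"
        using h(2) unfolding ker_rel_def
        by (auto simp: in_set_conv_nth list_all2_conv_all_nth)
      have m: "map \<tau> xs = map \<tau> ys"
        using h(2) unfolding ker_rel_def by (auto simp: list_all2_conv_all_nth intro: nth_equalityI)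
      have en: "\<forall>f xs. length xs = ar f \<and> set xs \<subseteq> A \<longrightarrow> \<tau> (op f xs) = op f (map \<tau> xs)"
        using endo unfolding is_endomorphism_def by (rule conjunct2)
      have "\<tau> (op f xs) = op f (map \<tau> xs)" using en h(1) sx by simp
      moreover have "\<tau> (op f ys) = op f (map \<tau> ys)" using en ly sy by simp
      ultimately have "\<tau> (op f xs) = \<tau> (op f ys)" using m by simp
      moreover have "op f xs \<in> A" "op f ys \<in> A" using alg h(1) ly sx sy unfolding is_algebra_def by auto
      ultimately show ?thesis unfolding ker_rel_def by auto
    qed
    ultimately show ?thesis unfolding is_congruence_def by blast
  qed
  have P2: "Cg ar A op x y = Cg_sm ar A op \<tau> x y" if xy: "(x, y) \<in> ker_rel A \<tau>" for x y
  proof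
    show "Cg ar A op x y \<subseteq> Cg_sm ar A op \<tau> x y"
      unfolding Cg_def Cg_sm_def is_sm_congruence_def by blast
  next
    let ?S = "{\<theta>. is_congruence ar A op \<theta> \<and> (x, y) \<in> \<theta>}"
    have ne: "ker_rel A \<tau> \<in> ?S" using kc xy by blast
    have c: "is_congruence ar A op (Cg ar A op x y)"
      unfolding Cg_def by (rule cong_Inter) (use ne in auto)
    have sub: "Cg ar A op x y \<subseteq> ker_rel A \<tau>" unfolding Cg_def using ne by blast
    have "is_sm_congruence ar A op \<tau> (Cg ar A op x y)" using P1 c sub by blast
    moreover have "(x, y) \<in> Cg ar A op x y" unfolding Cg_def by blast
    ultimately show "Cg_sm ar A op \<tau> x y \<subseteq> Cg ar A op x y"
      unfolding Cg_sm_def by blast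
  qed
  show ?thesis using P1 P2 by blast
qed

end
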